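(* Let $\Omega\subset\mathbb{R}^3$ be a MAC compatible bounded domain and $\mathcal D=(\mathcal M,\mathcal E)$ a MAC grid of $\Omega$. For $i,j\in\{1,2,3\}$ define $\mathcal R^{(i,j)}_{\mathcal E}:H^{(i)}_{\mathcal E,0}\to H^{(j)}_{\mathcal E,0}$ by $\mathcal R^{(i,j)}_{\mathcal E}v=\sum_{\sigma\in\mathcal E^{(j)}_{\rm int}}(\mathcal R^{(i,j)}_{\mathcal E}v)_\sigma\mathbb 1_{D_\sigma}$, where $(\mathcal R^{(i,i)}_{\mathcal E}v)_\sigma=v_\sigma$ and, for $j\neq i$ and $\sigma=K|L\in\mathcal E^{(j)}_{\rm int}$, $(\mathcal R^{(i,j)}_{\mathcal E}v)_\sigma=\frac14\sum_{\sigma'\in\mathcal N_\sigma}v_{\sigma'}$ with $\mathcal N_\sigma=\{\sigma'\in\mathcal E^{(i)}:\sigma'\in\mathcal E(K)\cup\mathcal E(L)\}$. For $i\in\{1,2,3\}$ define $\mathcal R^{(i)}_{\mathcal M}:H^{(i)}_{\mathcal E}\to L_{\mathcal M}$ by $(\mathcal R^{(i)}_{\mathcal M}v)_K=\frac12\sum_{\sigma\in\mathcal E^{(i)}\cap\mathcal E(K)}v_\sigma$ on each $K$. Then there exists $C\ge0$, depending only on $\eta_{\mathcal M}$ and non-increasing with respect to it, such that for all $1\le q<\infty$ and all $i,j\in\{1,2,3\}$: $\|\mathcal R^{(i,j)}_{\mathcal E}v\|_{L^q(\Omega)}\le C\|v\|_{L^q(\Omega)}$ for all $v\in H^{(i)}_{\mathcal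 E,0}$, and $\|\mathcal R^{(i)}_{\mathcal M}v\|_{L^q(\Omega)}\le C\|v\|_{L^q(\Omega)}$ for all $v\in H^{(i)}_{\mathcal E}$.
   Context: MAC compatible domain: bounded connected open $\Omega$ whose closure is a finite union of closed rectangular parallelepipeds with faces orthogonal to the canonical basis $\boldsymbol e_1,\boldsymbol e_2,\boldsymbol e_3$. MAC grid: $\mathcal M$ a structured partition of $\Omega$ into rectangular parallelepipeds $K$; $\mathcal E$ the set of faces, $\mathcal E(K)$ the faces of $K$, $\mathcal E^{(i)}$ the faces orthogonal to $\boldsymbol e_i$ ($\mathcal E^{(i)}_{\rm int}$ interior ones); $\sigma=K|L$ the common face of $K,L$; $D_{K,\sigma}$ the half of $K$ adjacent to $\sigma$, dual cell $D_\sigma=D_{K,\sigma}\cup D_{L,\sigma}$ for $\sigma=K|L$, $D_\sigma=D_{K,\sigma}$ for boundary $\sigma$. $\boldsymbol x_\sigma$ mass centre of $\sigma$; $h_{\mathcal M}=\max_K\operatorname{diam}K$; $\eta_{\mathcal M}=\frac1{h_{\mathcal M}}\min_K\min_i\{|\boldsymbol x_\sigma-\boldsymbol x_{\sigma'}|:\sigma\ne\sigma'\in\mathcal E^{(i)}\cap\mathcal E(K)\}$. $L_{\mathcal M}$: functions constant on each cell. $H^{(i)}_{\mathcal E}$: functions constant on each $D_\sigma$, $\sigma\in\mathcal E^{(i)}$ (value $v_\sigma$); $H^{(i)}_{\mathcal E,0}$: those with $v_\sigma=0$ for boundary faces $\sigma$. *)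

theory Defs
  imports "HOL-Analysis.Analysis"
begin

text \<open>
  Structured MAC grid in R^3.  The coordinate axes are indexed by the type 3.
  For each axis d, x d is a strictly increasing sequence of grid coordinates.  A is the finite set of cells of the mesh M.
  A face is a pair (d, k): the face orthogonal to e_d lying in the hyperplane
  x_d = x d (k d), spanning the cell k in the other directions.
\<close>

type_synonym cidx = "3 \<Rightarrow> nat"
type_synonym face = "3 \<times> (3 \<Rightarrow> nat)"

definition cell :: "(3 \<Rightarrow> nat \<Rightarrow> real) \<Rightarrow> cidx \<Rightarrow> (real^3) set" where
  "cell x K = box (\<chi> d. x d (K d)) (\<chi> d. x d (Suc (K d)))"

definition cell_cl :: "(3 \<Rightarrow> nat \<Rightarrow> real) \<Rightarrow> cidx \<Rightarrow> (real^3) set" where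
  "cell_cl x K = cbox (\<chi> d. x d (K d)) (\<chi> d. x d (Suc (K d)))"

definition MAC_grid :: "(real^3) set \<Rightarrow> (3 \<Rightarrow> nat \<Rightarrow> real) \<Rightarrow> cidx set \<Rightarrow> bool" where
  "MAC_grid \<Omega> x A \<longleftrightarrow>
     (\<forall>d. strict_mono (x d)) \<and> finite A \<and> A \<noteq> {} \<and>
     \<Omega> = interior (\<Union>K\<in>A. cell_cl x K) \<and> connected \<Omega>"

definition cell_faces :: "cidx \<Rightarrow> face set" where
  "cell_faces K = {(d, K) | d. True} \<union> {(d, K(d := Suc (K d))) | d. True}"

definition faces :: "cidx set \<Rightarrow> face set" where
  "faces A = (\<Union>K\<in>A. cell_faces K)"

definition faces_dir :: "cidx set \<Rightarrow> 3 \<Rightarrow> face set" where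
  "faces_dir A i = {\<sigma> \<in> faces A. fst \<sigma> = i}"

definition int_faces_dir :: "cidx set \<Rightarrow> 3 \<Rightarrow> face set" where
  "int_faces_dir A i = {\<sigma> \<in> faces_dir A i.
      \<exists>K L. K \<in> A \<and> L \<in> A \<and> K \<noteq> L \<and> \<sigma> \<in> cell_faces K \<and> \<sigma> \<in> cell_faces L}"

definition half_cell :: "(3 \<Rightarrow> nat \<Rightarrow> real) \<Rightarrow> cidx \<Rightarrow> face \<Rightarrow> (real^3) set" where
  "half_cell x K \<sigma> = (case \<sigma> of (d, k) \<Rightarrow>
     (let mid = (x d (K d) + x d (Suc (K d))) / 2
      in if k = K
         then box (\<chi> e. x e (K e)) (\<chi> e. if e = d then mid else x e (Suc (K e)))
         else box (\<chi> e. if e = d then mid else x e (K e)) (\<chi> e. x e (Suc (K e)))))"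

definition dual_cell :: "(3 \<Rightarrow> nat \<Rightarrow> real) \<Rightarrow> cidx set \<Rightarrow> face \<Rightarrow> (real^3) set" where
  "dual_cell x A \<sigma> = (\<Union>K\<in>{K \<in> A. \<sigma> \<in> cell_faces K}. half_cell x K \<sigma>)"

definition fun_E :: "(3 \<Rightarrow> nat \<Rightarrow> real) \<Rightarrow> cidx set \<Rightarrow> 3 \<Rightarrow> (face \<Rightarrow> real) \<Rightarrow> real^3 \<Rightarrow> real" where
  "fun_E x A i v = (\<lambda>p. \<Sum>\<sigma>\<in>faces_dir A i. v \<sigma> * indicator (dual_cell x A \<sigma>) p)"

definition nbr_faces :: "cidx set \<Rightarrow> 3 \<Rightarrow> face \<Rightarrow> face set" where
  "nbr_faces A i \<sigma> = {\<sigma>' \<in> faces_dir A i. \<exists>K L. K \<in> A \<and> L \<in> A \<and> K \<noteq> L \<and>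
      \<sigma> \<in> cell_faces K \<and> \<sigma> \<in> cell_faces L \<and> \<sigma>' \<in> cell_faces K \<union> cell_faces L}"

definition R_EE_val :: "cidx set \<Rightarrow> 3 \<Rightarrow> 3 \<Rightarrow> (face \<Rightarrow> real) \<Rightarrow> face \<Rightarrow> real" where
  "R_EE_val A i j v \<sigma> = (if i = j then v \<sigma> else 1/4 * (\<Sum>\<sigma>'\<in>nbr_faces A i \<sigma>. v \<sigma>'))"

definition R_EE :: "(3 \<Rightarrow> nat \<Rightarrow> real) \<Rightarrow> cidx set \<Rightarrow> 3 \<Rightarrow> 3 \<Rightarrow> (face \<Rightarrow> real) \<Rightarrow> real^3 \<Rightarrow> real" where
  "R_EE x A i j v = (\<lambda>p. \<Sum>\<sigma>\<in>int_faces_dir A j. R_EE_val A i j v \<sigma> * indicator (dual_cell x A \<sigma>) p)"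

definition R_M :: "(3 \<Rightarrow> nat \<Rightarrow> real) \<Rightarrow> cidx set \<Rightarrow> 3 \<Rightarrow> (face \<Rightarrow> real) \<Rightarrow> real^3 \<Rightarrow> real" where
  "R_M x A i v = (\<lambda>p. \<Sum>K\<in>A. (1/2 * (\<Sum>\<sigma>\<in>faces_dir A i \<inter> cell_faces K. v \<sigma>)) * indicator (cell x K) p)"

definition Lq_norm :: "(real^3) set \<Rightarrow> real \<Rightarrow> (real^3 \<Rightarrow> real) \<Rightarrow> real" where
  "Lq_norm \<Omega> q f = (LINT p:\<Omega>|lborel. \<bar>f p\<bar> powr q) powr (1 / q)"

definition face_centre :: "(3 \<Rightarrow> nat \<Rightarrow> real) \<Rightarrow> face \<Rightarrow> real^3" where
  "face_centre x \<sigma> = (case \<sigma> of (d, k) \<Rightarrow>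
     (\<chi> e. if e = d then x d (k d) else (x e (k e) + x e (Suc (k e))) / 2))"

definition mesh_size :: "(3 \<Rightarrow> nat \<Rightarrow> real) \<Rightarrow> cidx set \<Rightarrow> real" where
  "mesh_size x A = Max ((\<lambda>K. diameter (cell x K)) ` A)"

definition eta :: "(3 \<Rightarrow> nat \<Rightarrow> real) \<Rightarrow> cidx set \<Rightarrow> real" where
  "eta x A = (1 / mesh_size x A) *
     Min {dist (face_centre x \<sigma>) (face_centre x \<sigma>') | K \<sigma> \<sigma>'.
            K \<in> A \<and> \<sigma> \<in> cell_faces K \<and> \<sigma>' \<in> cell_faces K \<and> fst \<sigma> = fst \<sigma>' \<and> \<sigma> \<noteq> \<sigma>'}"

end

theory Submission
  imports Defs
begin


lemma lint_repr:
  fixes D :: "'s \<Rightarrow> (real^3) set" and c :: "'s \<Rightarrow> real"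
  assumes S: "finite S" and fm: "\<And>s. s\<in>S \<Longrightarrow> D s \<in> fmeasurable lborel"
    and sub: "\<And>s. s\<in>S \<Longrightarrow> D s \<subseteq> \<Omega>"
    and disj: "\<And>s t. s\<in>S \<Longrightarrow> t\<in>S \<Longrightarrow> s\<noteq>t \<Longrightarrow> D s \<inter> D t = {}"
    and q: "0 < q"
  shows "(LINT p:\<Omega>|lborel. \<bar>\<Sum>s\<in>S. c s * indicator (D s) p\<bar> powr q) = (\<Sum>s\<in>S. \<bar>c s\<bar> powr q * measure lborel (D s))"
proof -
  have pw: "indicator \<Omega> p *\<^sub>R \<bar>\<Sum>s\<in>S. c s * indicator (D s) p\<bar> powr q = (\<Sum>s\<in>S. \<bar>c s\<bar> powr q * indicator (D s) p)" for p
  proof (cases "\<exists>s\<in>S. p \<in> D s")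
    case True
    then obtain s0 where s0: "s0\<in>S" "p \<in> D s0" by blast
    have oth: "\<And>t. t\<in>S \<Longrightarrow> t\<noteq>s0 \<Longrightarrow> p \<notin> D t" using disj s0 by blast
    have e1: "(\<Sum>s\<in>S. c s * indicator (D s) p) = (\<Sum>s\<in>S. if s = s0 then c s else 0)"
      by (rule sum.cong) (use oth s0 in auto)
    have e2: "(\<Sum>s\<in>S. \<bar>c s\<bar> powr q * indicator (D s) p) = (\<Sum>s\<in>S. if s = s0 then \<bar>c s\<bar> powr q else 0)"
      by (rule sum.cong) (use oth s0 in auto)
    have "p \<in> \<Omega>" using sub s0 by blast
    then show ?thesis using e1 e2 S s0 by simp
  next
    case False
    then have "(\<Sum>s\<in>S. c s * indicator (D s) p) = 0" "(\<Sum>s\<in>S. \<bar>c s\<bar> powr q * indicator (D s) p) = 0"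
      by (auto intro!: sum.neutral)
    then show ?thesis by simp
  qed
  have "(LINT p:\<Omega>|lborel. \<bar>\<Sum>s\<in>S. c s * indicator (D s) p\<bar> powr q)
      = (LINT p|lborel. (\<Sum>s\<in>S. \<bar>c s\<bar> powr q * indicator (D s) p))"
    unfolding set_lebesgue_integral_def using pw by presburger
  also have "\<dots> = (\<Sum>s\<in>S. (LINT p|lborel. \<bar>c s\<bar> powr q * indicator (D s) p))"
    by (rule Bochner_Integration.integral_sum) (use fm in \<open>auto simp: fmeasurable_def\<close>)
  also have "\<dots> = (\<Sum>s\<in>S. \<bar>c s\<bar> powr q * measure lborel (D s))"
    by (rule sum.cong) auto
  finally show ?thesis .
qed

lemma meas_box_cart:
  fixes a b :: "real^'n"
  assumes "\<And>i. a$i \<le> b$i"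
  shows "measure lborel (box a b) = (\<Prod>i\<in>UNIV. b$i - a$i)"
proof -
  have "measure lborel (box a b) = measure lborel (cbox a b)"
    by (simp only: measure_lborel_box_eq measure_lborel_cbox_eq)
  also have "\<dots> = (\<Prod>i\<in>UNIV. b$i - a$i)"
  proof (rule content_cbox_cart)
    have "a \<in> cbox a b" using assms by (simp add: mem_box_cart)
    then show "cbox a b \<noteq> {}" by blast
  qed
  finally show ?thesis .
qed

lemma cell_faces_eq: "cell_faces K = (\<lambda>d. (d, K)) ` UNIV \<union> (\<lambda>d. (d, K(d := Suc (K d)))) ` UNIV"
  unfolding cell_faces_def by auto

lemma finite_cell_faces[simp]: "finite (cell_faces K)"
  unfolding cell_faces_eq by simp

lemma cf_dir: "(d, k) \<in> cell_faces K \<longleftrightarrow> k = K \<or> k = K(d := Suc (K d))"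
  unfolding cell_faces_def by auto

lemma cf_cells: "(d, k) \<in> cell_faces K \<Longrightarrow> K = k \<or> K = k(d := k d - 1)"
  unfolding cf_dir by auto

lemma cf_ne: "K(d := Suc (K d)) \<noteq> K"
  by (metis fun_upd_same n_not_Suc_n)

lemma half_meas:
  assumes mono: "\<forall>e. strict_mono (x e)" and k: "(d, k) \<in> cell_faces K"
  shows "measure lborel (half_cell x K (d, k)) =
     (\<Prod>e\<in>UNIV. if e = d then (x e (Suc (K e)) - x e (K e)) / 2 else x e (Suc (K e)) - x e (K e))"
proof -
  have lt: "x e (K e) < x e (Suc (K e))" for e using mono by (simp add: strict_mono_def)
  show ?thesis
  proof (cases "k = K")
    case True
    show ?thesis unfolding half_cell_def using True
      by (simp add: Let_def, subst meas_box_cart) (use lt in \<open>auto intro!: prod.cong simp: less_imp_le field_simps\<close>)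
  next
    case False
    show ?thesis unfolding half_cell_def using False
      by (simp add: Let_def, subst meas_box_cart) (use lt in \<open>auto intro!: prod.cong simp: less_imp_le field_simps\<close>)
  qed
qed

lemma half_sub_cell:
  assumes mono: "\<forall>e. strict_mono (x e)"
  shows "half_cell x K (d, k) \<subseteq> cell x K"
proof -
  have lt: "x e (K e) < x e (Suc (K e))" for e using mono by (simp add: strict_mono_def)
  show ?thesis
    unfolding half_cell_def cell_def Let_def
    apply (auto simp: mem_box_cart split: if_splits)
    subgoal for p i using lt[of i] lt[of d] by (drule_tac spec[of _ i], cases "i = d", auto)
    subgoal for p i using lt[of i] lt[of d] by (drule_tac spec[of _ i], cases "i = d", auto)
    done
qed

lemma half_open: "open (half_cell x K \<sigma>)"
  unfolding half_cell_def by (auto split: prod.splits simp: Let_def)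



lemma mesh_props:
  assumes G: "MAC_grid \<Omega> x A"
  shows "0 < mesh_size x A" "0 < eta x A"
    "\<And>K d. K\<in>A \<Longrightarrow> eta x A * mesh_size x A \<le> x d (Suc (K d)) - x d (K d)"
    "\<And>K d. K\<in>A \<Longrightarrow> x d (Suc (K d)) - x d (K d) \<le> mesh_size x A"
proof -
  have mono: "\<forall>d. strict_mono (x d)" and fin: "finite A" and ne: "A \<noteq> {}"
    using G unfolding MAC_grid_def by auto
  have lt: "x e (K e) < x e (Suc (K e))" for e K using mono by (simp add: strict_mono_def)
  have diam: "x d (Suc (K d)) - x d (K d) \<le> diameter (cell x K)" for K d
  proof -
    let ?a = "(\<chi> e. x e (K e)) :: real^3" and ?b = "(\<chi> e. x e (Suc (K e))) :: real^3"
    have "((\<chi> e. (x e (K e) + x e (Suc (K e)))/2) :: real^3) \<in> box ?a ?b"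
      using lt by (simp add: mem_box_cart)
    then have ne: "box ?a ?b \<noteq> {}" by blast
    have "x d (Suc (K d)) - x d (K d) = \<bar>(?a - ?b)$d\<bar>" using lt[of d K] by simp
    also have "\<dots> \<le> dist ?a ?b" unfolding dist_norm by (rule component_le_norm_cart)
    also have "\<dots> \<le> diameter (cbox ?a ?b)"
      by (rule diameter_bounded_bound) (use lt in \<open>auto simp: mem_box_cart less_imp_le\<close>)
    also have "\<dots> = diameter (cell x K)"
      unfolding cell_def using diameter_closure[of "box ?a ?b"] ne by simp
    finally show ?thesis .
  qed
  have hge: "K\<in>A \<Longrightarrow> diameter (cell x K) \<le> mesh_size x A" for K
    unfolding mesh_size_def using fin by (intro Max_ge) auto
  show wle: "\<And>K d. K\<in>A \<Longrightarrow> x d (Suc (K d)) - x d (K d) \<le> mesh_size x A"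
    using diam hge order_trans by blast
  obtain K0 where K0: "K0 \<in> A" using ne by blast
  show hpos: "0 < mesh_size x A" using wle[OF K0, of 0] lt[of 0 K0] by linarith
  define E where "E = {dist (face_centre x \<sigma>) (face_centre x \<sigma>') | K \<sigma> \<sigma>'.
            K \<in> A \<and> \<sigma> \<in> cell_faces K \<and> \<sigma>' \<in> cell_faces K \<and> fst \<sigma> = fst \<sigma>' \<and> \<sigma> \<noteq> \<sigma>'}"
  have etadef: "eta x A = (1 / mesh_size x A) * Min E" unfolding eta_def E_def ..
  have finE: "finite E"
  proof -
    have "E \<subseteq> (\<lambda>(K,\<sigma>,\<sigma>'). dist (face_centre x \<sigma>) (face_centre x \<sigma>')) ` (SIGMA K:A. cell_faces K \<times> cell_faces K)"
      unfolding E_def by force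
    moreover have "finite (SIGMA K:A. cell_faces K \<times> cell_faces K)" using fin by auto
    ultimately show ?thesis by (meson finite_surj)
  qed
  have fc_d: "face_centre x (d, k) $ d = x d (k d)" for d k unfolding face_centre_def by simp
  have Epos: "t \<in> E \<Longrightarrow> 0 < t" for t
  proof -
    assume "t \<in> E"
    then obtain K \<sigma> \<sigma>' where t: "t = dist (face_centre x \<sigma>) (face_centre x \<sigma>')"
      and s: "\<sigma> \<in> cell_faces K" "\<sigma>' \<in> cell_faces K" "fst \<sigma> = fst \<sigma>'" "\<sigma> \<noteq> \<sigma>'"
      unfolding E_def by blast
    obtain d k k' where dk: "\<sigma> = (d,k)" "\<sigma>' = (d,k')" using s(3) by (cases \<sigma>, cases \<sigma>') auto
    have "k d \<noteq> k' d" using s dk by (auto simp: cf_dir cf_ne)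
    then have "x d (k d) \<noteq> x d (k' d)" using mono strict_mono_eq by metis
    then have "face_centre x \<sigma> \<noteq> face_centre x \<sigma>'" using dk fc_d by metis
    then show ?thesis using t by simp
  qed
  have Ele: "K\<in>A \<Longrightarrow> \<exists>t\<in>E. t \<le> x d (Suc (K d)) - x d (K d)" for K d
  proof -
    assume K: "K \<in> A"
    let ?s = "(d, K)" and ?s' = "(d, K(d := Suc (K d)))"
    have mem: "dist (face_centre x ?s) (face_centre x ?s') \<in> E"
      unfolding E_def using K cf_ne[of K d] by (force simp: cf_dir)
    have "dist (face_centre x ?s) (face_centre x ?s') \<le> (\<Sum>i\<in>UNIV. \<bar>(face_centre x ?s - face_centre x ?s')$i\<bar>)"
      unfolding dist_norm by (rule norm_le_l1_cart)
    also have "\<dots> = (\<Sum>i\<in>UNIV. if i = d then x d (Suc (K d)) - x d (K d) else 0)"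
      by (rule sum.cong) (use lt[of d K] in \<open>auto simp: face_centre_def\<close>)
    also have "\<dots> = x d (Suc (K d)) - x d (K d)" by simp
    finally show ?thesis using mem by blast
  qed
  have Ene: "E \<noteq> {}" using Ele[OF K0, of 0] by blast
  have minpos: "0 < Min E" using Min_in[OF finE Ene] Epos by blast
  show "0 < eta x A" unfolding etadef using minpos hpos by simp
  show "\<And>K d. K\<in>A \<Longrightarrow> eta x A * mesh_size x A \<le> x d (Suc (K d)) - x d (K d)"
  proof -
    fix K d assume K: "K \<in> A"
    obtain t where "t\<in>E" "t \<le> x d (Suc (K d)) - x d (K d)" using Ele[OF K] by blast
    then have "Min E \<le> x d (Suc (K d)) - x d (K d)" using Min_le[OF finE] by fastforce
    then show "eta x A * mesh_size x A \<le> x d (Suc (K d)) - x d (K d)"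
      unfolding etadef using hpos by simp
  qed
qed



lemma half_fm: "half_cell x K \<sigma> \<in> fmeasurable lborel"
  unfolding half_cell_def by (auto simp: Let_def split: prod.splits)

lemma half_sets: "half_cell x K \<sigma> \<in> sets lborel"
  using half_open[of x K \<sigma>] by simp

lemma cell_fm: "cell x K \<in> fmeasurable lborel"
  unfolding cell_def by auto

lemma cell_sub:
  assumes G: "MAC_grid \<Omega> x A" and K: "K \<in> A"
  shows "cell x K \<subseteq> \<Omega>"
proof -
  have "\<Omega> = interior (\<Union>K\<in>A. cell_cl x K)" using G unfolding MAC_grid_def by auto
  moreover have "cell x K \<subseteq> (\<Union>K\<in>A. cell_cl x K)"
    using K box_subset_cbox unfolding cell_def cell_cl_def by blast
  moreover have "open (cell x K)" unfolding cell_def by (rule open_box)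
  ultimately show ?thesis using interior_maximal by blast
qed

lemma half_bounds:
  assumes G: "MAC_grid \<Omega> x A" and K: "K \<in> A" and k: "(d, k) \<in> cell_faces K"
  shows "(eta x A * mesh_size x A / 2)^3 \<le> measure lborel (half_cell x K (d, k))"
    "measure lborel (half_cell x K (d, k)) \<le> mesh_size x A ^ 3"
proof -
  have mono: "\<forall>d. strict_mono (x d)" using G unfolding MAC_grid_def by auto
  define f where "f e = (if e = d then (x e (Suc (K e)) - x e (K e)) / 2 else x e (Suc (K e)) - x e (K e))" for e
  have m: "measure lborel (half_cell x K (d, k)) = (\<Prod>e\<in>UNIV. f e)"
    unfolding f_def by (rule half_meas[OF mono k])
  note mp = mesh_props[OF G]
  have ep: "0 \<le> eta x A * mesh_size x A" using mp(1,2) by simp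
  have lo: "eta x A * mesh_size x A / 2 \<le> f e" for e
    using mp(3)[OF K, of e] ep unfolding f_def by auto
  have hi: "f e \<le> mesh_size x A" for e
    using mp(4)[OF K, of e] mp(3)[OF K, of e] ep unfolding f_def by auto
  have fnn: "0 \<le> f e" for e using lo[of e] ep by linarith
  have "(eta x A * mesh_size x A / 2)^3 = (\<Prod>e\<in>(UNIV::3 set). eta x A * mesh_size x A / 2)" by simp
  also have "\<dots> \<le> (\<Prod>e\<in>UNIV. f e)" by (rule prod_mono) (use lo ep in auto)
  finally show "(eta x A * mesh_size x A / 2)^3 \<le> measure lborel (half_cell x K (d, k))" using m by simp
  have "(\<Prod>e\<in>UNIV. f e) \<le> (\<Prod>e\<in>(UNIV::3 set). mesh_size x A)"
    by (rule prod_mono) (use fnn hi in auto)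
  then show "measure lborel (half_cell x K (d, k)) \<le> mesh_size x A ^ 3" using m by simp
qed

lemma cell_bound:
  assumes G: "MAC_grid \<Omega> x A" and K: "K \<in> A"
  shows "measure lborel (cell x K) \<le> mesh_size x A ^ 3"
proof -
  have mono: "\<forall>d. strict_mono (x d)" using G unfolding MAC_grid_def by auto
  have lt: "x e (K e) < x e (Suc (K e))" for e using mono by (simp add: strict_mono_def)
  have m: "measure lborel (cell x K) = (\<Prod>e\<in>UNIV. x e (Suc (K e)) - x e (K e))"
    unfolding cell_def by (subst meas_box_cart) (use lt in \<open>auto simp: less_imp_le\<close>)
  note mp = mesh_props[OF G]
  have "(\<Prod>e\<in>UNIV. x e (Suc (K e)) - x e (K e)) \<le> (\<Prod>e\<in>(UNIV::3 set). mesh_size x A)"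
    by (rule prod_mono) (use lt mp(4)[OF K] in \<open>auto simp: less_imp_le\<close>)
  then show ?thesis using m by simp
qed

lemma cells_disj:
  assumes mono: "\<forall>d. strict_mono (x d)" and ne: "K \<noteq> L"
  shows "cell x K \<inter> cell x L = {}"
proof (rule ccontr)
  assume "cell x K \<inter> cell x L \<noteq> {}"
  then obtain p where p: "p \<in> cell x K" "p \<in> cell x L" by blast
  obtain e where e: "K e \<noteq> L e" using ne by blast
  have pK: "x e (K e) < p$e" "p$e < x e (Suc (K e))" using p(1) unfolding cell_def by (auto simp: mem_box_cart)
  have pL: "x e (L e) < p$e" "p$e < x e (Suc (L e))" using p(2) unfolding cell_def by (auto simp: mem_box_cart)
  show False
  proof (cases "K e < L e")
    case True
    then have "x e (Suc (K e)) \<le> x e (L e)" using mono by (simp add: strict_mono_less_eq Suc_leI)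
    then show False using pK pL by linarith
  next
    case False
    then have "L e < K e" using e by simp
    then have "x e (Suc (L e)) \<le> x e (K e)" using mono by (simp add: strict_mono_less_eq Suc_leI)
    then show False using pK pL by linarith
  qed
qed

lemma halves_disj:
  "half_cell x K (d, K) \<inter> half_cell x K (d, K(d := Suc (K d))) = {}"
proof -
  let ?m = "(x d (K d) + x d (Suc (K d))) / 2"
  have "p $ d < ?m" if "p \<in> half_cell x K (d, K)" for p
    using that unfolding half_cell_def Let_def by (auto simp: mem_box_cart dest!: spec[of _ d])
  moreover have "?m < p $ d" if "p \<in> half_cell x K (d, K(d := Suc (K d)))" for p
  proof -
    have ne: "K(d := Suc (K d)) \<noteq> K" by (rule cf_ne)
    show ?thesis using that ne unfolding half_cell_def Let_def by (auto simp: mem_box_cart dest!: spec[of _ d])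
  qed
  ultimately show ?thesis by fastforce
qed

lemma dual_disj:
  assumes G: "MAC_grid \<Omega> x A" and s: "\<sigma> \<in> faces_dir A i" "\<sigma>' \<in> faces_dir A i" "\<sigma> \<noteq> \<sigma>'"
  shows "dual_cell x A \<sigma> \<inter> dual_cell x A \<sigma>' = {}"
proof (rule ccontr)
  have mono: "\<forall>d. strict_mono (x d)" using G unfolding MAC_grid_def by auto
  assume "dual_cell x A \<sigma> \<inter> dual_cell x A \<sigma>' \<noteq> {}"
  then obtain p where p0: "p \<in> dual_cell x A \<sigma>" "p \<in> dual_cell x A \<sigma>'" by blast
  obtain K where K: "p \<in> half_cell x K \<sigma>" "\<sigma> \<in> cell_faces K"
    using p0(1) unfolding dual_cell_def by blast
  obtain K' where K': "p \<in> half_cell x K' \<sigma>'" "\<sigma>' \<in> cell_faces K'"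
    using p0(2) unfolding dual_cell_def by blast
  have fs: "fst \<sigma> = i" "fst \<sigma>' = i" using s unfolding faces_dir_def by auto
  obtain k where k: "\<sigma> = (i, k)" using fs(1) by (cases \<sigma>) simp
  obtain k' where k': "\<sigma>' = (i, k')" using fs(2) by (cases \<sigma>') simp
  show False
  proof (cases "K = K'")
    case False
    have "p \<in> cell x K" using half_sub_cell[OF mono, of K i k] K(1) k by blast
    moreover have "p \<in> cell x K'" using half_sub_cell[OF mono, of K' i k'] K'(1) k' by blast
    ultimately show False using cells_disj[OF mono False] by blast
  next
    case True
    have c1: "k = K \<or> k = K(i := Suc (K i))" using K(2) k by (simp add: cf_dir)
    have c2: "k' = K \<or> k' = K(i := Suc (K i))" using K'(2) k' True by (simp add: cf_dir)
    have nk: "k \<noteq> k'" using s(3) k k' by simp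
    have hd: "p \<notin> half_cell x K (i, K) \<inter> half_cell x K (i, K(i := Suc (K i)))"
      using halves_disj[of x K i] by blast
    have pk: "p \<in> half_cell x K (i, k)" using K(1) k by simp
    have pk': "p \<in> half_cell x K (i, k')" using K'(1) k' True by simp
    show False
    proof (cases "k = K")
      case True
      then have "k' = K(i := Suc (K i))" using c2 nk by auto
      then show False using hd pk pk' True by blast
    next
      case False
      then have "k = K(i := Suc (K i))" "k' = K" using c1 c2 nk by auto
      then show False using hd pk pk' by blast
    qed
  qed
qed

lemma card_le_list: "S \<subseteq> set xs \<Longrightarrow> card S \<le> length xs"
  using card_mono[OF finite_set] card_length le_trans by blast

lemma card2_cells:
  "card {K\<in>A. (d, k) \<in> cell_faces K} \<le> 2"
proof -
  have "{K\<in>A. (d, k) \<in> cell_faces K} \<subseteq> set [k, k(d := k d - 1)]" using cf_cells by auto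
  from card_le_list[OF this] show ?thesis by simp
qed

lemma dual_props:
  assumes G: "MAC_grid \<Omega> x A" and s: "\<sigma> \<in> faces_dir A i"
  shows "dual_cell x A \<sigma> \<in> fmeasurable lborel" "dual_cell x A \<sigma> \<subseteq> \<Omega>"
   "measure lborel (dual_cell x A \<sigma>) \<le> 2 * mesh_size x A ^ 3"
   "(eta x A * mesh_size x A / 2)^3 \<le> measure lborel (dual_cell x A \<sigma>)"
proof -
  have mono: "\<forall>d. strict_mono (x d)" and fin: "finite A" using G unfolding MAC_grid_def by auto
  obtain k where k: "\<sigma> = (i, k)" using s unfolding faces_dir_def by (cases \<sigma>) auto
  define C where "C = {K\<in>A. \<sigma> \<in> cell_faces K}"
  have finC: "finite C" using fin unfolding C_def by simp
  have D: "dual_cell x A \<sigma> = (\<Union>K\<in>C. half_cell x K \<sigma>)" unfolding dual_cell_def C_def ..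
  show fm: "dual_cell x A \<sigma> \<in> fmeasurable lborel"
    unfolding D using finC half_fm by (intro fmeasurable.finite_UN) auto
  show "dual_cell x A \<sigma> \<subseteq> \<Omega>"
    unfolding D C_def using cell_sub[OF G] half_sub_cell[OF mono] k by blast
  have "measure lborel (dual_cell x A \<sigma>) \<le> (\<Sum>K\<in>C. measure lborel (half_cell x K \<sigma>))"
    unfolding D by (rule measure_UNION_le) (use finC half_sets in auto)
  also have "\<dots> \<le> (\<Sum>K\<in>C. mesh_size x A ^ 3)"
    by (rule sum_mono) (use half_bounds(2)[OF G] k in \<open>auto simp: C_def\<close>)
  also have "\<dots> = card C * mesh_size x A ^ 3" by simp
  also have "\<dots> \<le> 2 * mesh_size x A ^ 3"
  proof -
    have "card C \<le> 2" unfolding C_def k by (rule card2_cells)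
    moreover have "0 \<le> mesh_size x A ^ 3" using mesh_props(1)[OF G] by simp
    ultimately show ?thesis by (simp add: mult_right_mono)
  qed
  finally show "measure lborel (dual_cell x A \<sigma>) \<le> 2 * mesh_size x A ^ 3" .
  obtain K0 where K0: "K0 \<in> A" "\<sigma> \<in> cell_faces K0" using s unfolding faces_dir_def faces_def by blast
  have "(eta x A * mesh_size x A / 2)^3 \<le> measure lborel (half_cell x K0 \<sigma>)"
    using half_bounds(1)[OF G K0(1)] K0(2) k by simp
  also have "\<dots> \<le> measure lborel (dual_cell x A \<sigma>)"
    by (rule measure_mono_fmeasurable[OF _ _ fm]) (use K0 half_sets in \<open>auto simp: dual_cell_def\<close>)
  finally show "(eta x A * mesh_size x A / 2)^3 \<le> measure lborel (dual_cell x A \<sigma>)" .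
qed



lemma avg_bound:
  fixes a :: "'s \<Rightarrow> real"
  assumes fin: "finite N" and cn: "real (card N) \<le> n" and n: "0 < n" and q: "1 \<le> q"
  shows "\<bar>1/n * (\<Sum>s\<in>N. a s)\<bar> powr q \<le> (\<Sum>s\<in>N. \<bar>a s\<bar> powr q)"
proof (cases "N = {}")
  case True then show ?thesis by simp
next
  case False
  define M where "M = Max ((\<lambda>s. \<bar>a s\<bar>) ` N)"
  have "M \<in> (\<lambda>s. \<bar>a s\<bar>) ` N" unfolding M_def by (rule Max_in) (use fin False in auto)
  then obtain s0 where s0: "s0\<in>N" "\<bar>a s0\<bar> = M" by auto
  have le: "\<bar>a s\<bar> \<le> M" if "s\<in>N" for s unfolding M_def using fin that by auto
  have M0: "0 \<le> M" using s0 by auto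
  have "\<bar>\<Sum>s\<in>N. a s\<bar> \<le> (\<Sum>s\<in>N. \<bar>a s\<bar>)" by (rule sum_abs)
  also have "\<dots> \<le> (\<Sum>s\<in>N. M)" by (rule sum_mono) (use le in auto)
  also have "\<dots> = card N * M" by simp
  also have "\<dots> \<le> n * M" using cn M0 by (intro mult_right_mono) auto
  finally have "\<bar>\<Sum>s\<in>N. a s\<bar> \<le> n * M" .
  then have "\<bar>1/n * (\<Sum>s\<in>N. a s)\<bar> \<le> M" using n by (simp add: abs_mult field_simps)
  then have "\<bar>1/n * (\<Sum>s\<in>N. a s)\<bar> powr q \<le> M powr q" using q by (intro powr_mono2) auto
  also have "\<dots> = \<bar>a s0\<bar> powr q" using s0 by simp
  also have "\<dots> \<le> (\<Sum>s\<in>N. \<bar>a s\<bar> powr q)"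
    by (rule member_le_sum) (use s0 fin in auto)
  finally show ?thesis .
qed

lemma count_bound:
  fixes G :: "'f \<Rightarrow> real" and N :: "'s \<Rightarrow> 'f set"
  assumes S: "finite S" and F: "finite F" and sub: "\<And>s. s\<in>S \<Longrightarrow> N s \<subseteq> F"
    and cnt: "\<And>f. f\<in>F \<Longrightarrow> real (card {s\<in>S. f \<in> N s}) \<le> m" and G: "\<And>f. f\<in>F \<Longrightarrow> 0 \<le> G f"
  shows "(\<Sum>s\<in>S. \<Sum>f\<in>N s. G f) \<le> m * (\<Sum>f\<in>F. G f)"
proof -
  have "(\<Sum>s\<in>S. \<Sum>f\<in>N s. G f) = (\<Sum>s\<in>S. \<Sum>f\<in>{f. f\<in>F \<and> f \<in> N s}. G f)"
  proof (rule sum.cong)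
    fix s assume "s \<in> S"
    then have "{f. f\<in>F \<and> f \<in> N s} = N s" using sub by blast
    then show "(\<Sum>f\<in>N s. G f) = (\<Sum>f\<in>{f. f\<in>F \<and> f \<in> N s}. G f)" by simp
  qed simp
  also have "\<dots> = (\<Sum>f\<in>F. \<Sum>s\<in>{s. s\<in>S \<and> f\<in>N s}. G f)" by (rule sum.swap_restrict[OF S F])
  also have "\<dots> = (\<Sum>f\<in>F. real (card {s\<in>S. f\<in>N s}) * G f)" by simp
  also have "\<dots> \<le> (\<Sum>f\<in>F. m * G f)" by (rule sum_mono) (use cnt G in \<open>auto intro: mult_right_mono\<close>)
  also have "\<dots> = m * (\<Sum>f\<in>F. G f)" by (simp add: sum_distrib_left)
  finally show ?thesis .
qed


lemma nbr_sub:
  "nbr_faces A i (j, k) \<subseteq> set [(i,k), (i,k(i:=Suc(k i))), (i,k(j:=k j - 1)), (i,(k(j:=k j - 1))(i:=Suc((k(j:=k j - 1)) i)))]"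
proof
  fix s assume s: "s \<in> nbr_faces A i (j, k)"
  obtain k' where k': "s = (i, k')" using s unfolding nbr_faces_def faces_dir_def by (cases s) auto
  obtain K L where KL: "(j,k) \<in> cell_faces K" "(j,k) \<in> cell_faces L" "s \<in> cell_faces K \<union> cell_faces L"
    using s unfolding nbr_faces_def by blast
  obtain K0 where K0: "(j,k) \<in> cell_faces K0" "(i,k') \<in> cell_faces K0" using KL k' by blast
  have "K0 = k \<or> K0 = k(j := k j - 1)" using cf_cells[OF K0(1)] .
  moreover have "k' = K0 \<or> k' = K0(i := Suc (K0 i))" using K0(2) by (simp add: cf_dir)
  ultimately show "s \<in> set [(i,k), (i,k(i:=Suc(k i))), (i,k(j:=k j - 1)), (i,(k(j:=k j - 1))(i:=Suc((k(j:=k j - 1)) i)))]"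
    using k' by auto
qed

lemma nbr_card: "finite (nbr_faces A i (j, k))" "card (nbr_faces A i (j, k)) \<le> 4"
  using nbr_sub[of A i j k] card_le_list[OF nbr_sub[of A i j k]] finite_subset by auto

lemma nbr_inv_card: "card {\<sigma>\<in>int_faces_dir A j. (i,k') \<in> nbr_faces A i \<sigma>} \<le> 4"
proof -
  have "{\<sigma>\<in>int_faces_dir A j. (i,k') \<in> nbr_faces A i \<sigma>} \<subseteq>
     set [(j,k'), (j,k'(j:=Suc(k' j))), (j,k'(i:=k' i - 1)), (j,(k'(i:=k' i - 1))(j:=Suc((k'(i:=k' i - 1)) j)))]"
  proof
    fix s assume s: "s \<in> {\<sigma>\<in>int_faces_dir A j. (i,k') \<in> nbr_faces A i \<sigma>}"
    obtain k where k: "s = (j, k)" using s unfolding int_faces_dir_def faces_dir_def by (cases s) auto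
    obtain K L where KL: "(j,k) \<in> cell_faces K" "(j,k) \<in> cell_faces L" "(i,k') \<in> cell_faces K \<union> cell_faces L"
      using s k unfolding nbr_faces_def by blast
    obtain K0 where K0: "(j,k) \<in> cell_faces K0" "(i,k') \<in> cell_faces K0" using KL by blast
    have "K0 = k' \<or> K0 = k'(i := k' i - 1)" using cf_cells[OF K0(2)] .
    moreover have "k = K0 \<or> k = K0(j := Suc (K0 j))" using K0(1) by (simp add: cf_dir)
    ultimately show "s \<in> set [(j,k'), (j,k'(j:=Suc(k' j))), (j,k'(i:=k' i - 1)), (j,(k'(i:=k' i - 1))(j:=Suc((k'(i:=k' i - 1)) j)))]"
      using k by auto
  qed
  from card_le_list[OF this] show ?thesis by simp
qed

lemma rm_card: "finite (faces_dir A i \<inter> cell_faces K)" "card (faces_dir A i \<inter> cell_faces K) \<le> 2"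
proof -
  have sub: "faces_dir A i \<inter> cell_faces K \<subseteq> set [(i,K),(i,K(i:=Suc(K i)))]"
    unfolding faces_dir_def by (auto simp: cf_dir)
  show "finite (faces_dir A i \<inter> cell_faces K)" by simp
  show "card (faces_dir A i \<inter> cell_faces K) \<le> 2" using card_le_list[OF sub] by simp
qed

lemma rm_inv: "card {K\<in>A. (i,k') \<in> faces_dir A i \<inter> cell_faces K} \<le> 2"
proof -
  have "card {K\<in>A. (i,k') \<in> faces_dir A i \<inter> cell_faces K} \<le> card {K\<in>A. (i,k') \<in> cell_faces K}"
  proof (rule card_mono)
    have "{K\<in>A. (i,k') \<in> cell_faces K} \<subseteq> set [k', k'(i := k' i - 1)]" using cf_cells by auto
    then show "finite {K\<in>A. (i,k') \<in> cell_faces K}" using finite_subset by blast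
  qed auto
  also have "\<dots> \<le> 2" by (rule card2_cells)
  finally show ?thesis .
qed

lemma finite_faces_dir: "finite A \<Longrightarrow> finite (faces_dir A i)"
  unfolding faces_dir_def faces_def by auto

lemma final_ineq:
  fixes X Y M q :: real
  assumes "0 \<le> X" "0 \<le> Y" "X \<le> M * Y" "1 \<le> M" "1 \<le> q"
  shows "X powr (1/q) \<le> M * Y powr (1/q)"
proof -
  have "X powr (1/q) \<le> (M * Y) powr (1/q)" using assms by (intro powr_mono2) auto
  also have "\<dots> = M powr (1/q) * Y powr (1/q)" using assms by (simp add: powr_mult)
  also have "\<dots> \<le> M * Y powr (1/q)"
  proof (rule mult_right_mono)
    have "M powr (1/q) \<le> M powr 1" using assms by (intro powr_mono) auto
    then show "M powr (1/q) \<le> M" using assms by simp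
  qed simp
  finally show ?thesis .
qed

lemma lint_faces:
  assumes G: "MAC_grid \<Omega> x A" and S: "S \<subseteq> faces_dir A d" and q: "0 < q"
  shows "(LINT p:\<Omega>|lborel. \<bar>\<Sum>\<sigma>\<in>S. c \<sigma> * indicator (dual_cell x A \<sigma>) p\<bar> powr q)
     = (\<Sum>\<sigma>\<in>S. \<bar>c \<sigma>\<bar> powr q * measure lborel (dual_cell x A \<sigma>))"
proof (rule lint_repr[OF _ _ _ _ q])
  have "finite A" using G unfolding MAC_grid_def by auto
  then show "finite S" using S finite_faces_dir finite_subset by blast
  show "\<And>s. s \<in> S \<Longrightarrow> dual_cell x A s \<in> fmeasurable lborel" using dual_props(1)[OF G] S by blast
  show "\<And>s. s \<in> S \<Longrightarrow> dual_cell x A s \<subseteq> \<Omega>" using dual_props(2)[OF G] S by blast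
  show "\<And>s t. s \<in> S \<Longrightarrow> t \<in> S \<Longrightarrow> s \<noteq> t \<Longrightarrow> dual_cell x A s \<inter> dual_cell x A t = {}"
    using dual_disj[OF G] S by blast
qed



lemma finish:
  fixes \<eta> h S X Y :: real
  assumes "0 < \<eta>" "0 < h" "0 \<le> S" "(\<eta>*h/2)^3 * S \<le> Y" "X \<le> 8*h^3*S"
  shows "X \<le> (64/\<bar>\<eta>\<bar>^3 + 1) * Y"
proof -
  have "0 \<le> (\<eta>*h/2)^3 * S" using assms(1-3) by simp
  then have Y0: "0 \<le> Y" using assms(4) by linarith
  have "8*h^3*S = (64/\<eta>^3) * ((\<eta>*h/2)^3 * S)" using assms(1) by (simp add: field_simps power_mult_distrib)
  also have "\<dots> \<le> (64/\<eta>^3) * Y" using assms(1,4) by (intro mult_left_mono) auto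
  also have "\<dots> \<le> (64/\<bar>\<eta>\<bar>^3 + 1) * Y" using assms(1) Y0 by (simp add: distrib_right)
  finally show ?thesis using assms(5) by linarith
qed

lemma normE:
  assumes G: "MAC_grid \<Omega> x A" and q: "1 \<le> q"
  shows "Lq_norm \<Omega> q (fun_E x A i v) = (\<Sum>\<sigma>\<in>faces_dir A i. \<bar>v \<sigma>\<bar> powr q * measure lborel (dual_cell x A \<sigma>)) powr (1/q)"
    "(eta x A * mesh_size x A / 2)^3 * (\<Sum>\<sigma>\<in>faces_dir A i. \<bar>v \<sigma>\<bar> powr q) \<le> (\<Sum>\<sigma>\<in>faces_dir A i. \<bar>v \<sigma>\<bar> powr q * measure lborel (dual_cell x A \<sigma>))"
proof -
  show "Lq_norm \<Omega> q (fun_E x A i v) = (\<Sum>\<sigma>\<in>faces_dir A i. \<bar>v \<sigma>\<bar> powr q * measure lborel (dual_cell x A \<sigma>)) powr (1/q)"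
    unfolding Lq_norm_def fun_E_def using lint_faces[OF G, of "faces_dir A i" i q v] q by simp
  have "(eta x A * mesh_size x A / 2)^3 * (\<Sum>\<sigma>\<in>faces_dir A i. \<bar>v \<sigma>\<bar> powr q)
      = (\<Sum>\<sigma>\<in>faces_dir A i. \<bar>v \<sigma>\<bar> powr q * (eta x A * mesh_size x A / 2)^3)"
    unfolding sum_distrib_left by (rule sum.cong) (simp_all add: mult.commute)
  also have "\<dots> \<le> (\<Sum>\<sigma>\<in>faces_dir A i. \<bar>v \<sigma>\<bar> powr q * measure lborel (dual_cell x A \<sigma>))"
    by (rule sum_mono, rule mult_left_mono) (use dual_props(4)[OF G] in auto)
  finally show "(eta x A * mesh_size x A / 2)^3 * (\<Sum>\<sigma>\<in>faces_dir A i. \<bar>v \<sigma>\<bar> powr q) \<le> (\<Sum>\<sigma>\<in>faces_dir A i. \<bar>v \<sigma>\<bar> powr q * measure lborel (dual_cell x A \<sigma>))" .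
qed

lemma main_EE:
  assumes G: "MAC_grid \<Omega> x A" and q: "1 \<le> q"
  shows "Lq_norm \<Omega> q (R_EE x A i j v) \<le> (64/\<bar>eta x A\<bar>^3 + 1) * Lq_norm \<Omega> q (fun_E x A i v)"
proof -
  have fin: "finite A" using G unfolding MAC_grid_def by auto
  note mp = mesh_props[OF G]
  define h where "h = mesh_size x A"
  define \<eta> where "\<eta> = eta x A"
  define Fi where "Fi = faces_dir A i"
  define Ij where "Ij = int_faces_dir A j"
  define D where "D = dual_cell x A"
  define Y where "Y = (\<Sum>\<sigma>\<in>Fi. \<bar>v \<sigma>\<bar> powr q * measure lborel (D \<sigma>))"
  define S where "S = (\<Sum>\<sigma>\<in>Fi. \<bar>v \<sigma>\<bar> powr q)"
  define X where "X = (\<Sum>\<sigma>\<in>Ij. \<bar>R_EE_val A i j v \<sigma>\<bar> powr q * measure lborel (D \<sigma>))"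
  have finFi: "finite Fi" unfolding Fi_def using finite_faces_dir[OF fin] .
  have IjF: "Ij \<subseteq> faces_dir A j" unfolding Ij_def int_faces_dir_def by auto
  have finIj: "finite Ij" using IjF finite_faces_dir[OF fin] finite_subset by blast
  have nE: "Lq_norm \<Omega> q (fun_E x A i v) = Y powr (1/q)" unfolding Y_def Fi_def D_def using normE(1)[OF G q] .
  have Ylo: "(\<eta> * h / 2)^3 * S \<le> Y" unfolding Y_def S_def Fi_def D_def \<eta>_def h_def using normE(2)[OF G q] .
  have nR: "Lq_norm \<Omega> q (R_EE x A i j v) = X powr (1/q)"
    unfolding Lq_norm_def R_EE_def X_def D_def Ij_def using lint_faces[OF G IjF[unfolded Ij_def], of q "R_EE_val A i j v"] q by simp
  have S0: "0 \<le> S" unfolding S_def by (rule sum_nonneg) simp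
  have X0: "0 \<le> X" unfolding X_def by (rule sum_nonneg) simp
  have Y0: "0 \<le> Y" unfolding Y_def by (rule sum_nonneg) simp
  have XY: "X \<le> (64/\<bar>\<eta>\<bar>^3 + 1) * Y"
  proof (cases "i = j")
    case True
    have Xe: "X = (\<Sum>\<sigma>\<in>Ij. \<bar>v \<sigma>\<bar> powr q * measure lborel (D \<sigma>))"
      unfolding X_def using True by (simp add: R_EE_val_def)
    have "X \<le> Y" unfolding Xe Y_def
    proof (rule sum_mono2[OF finFi])
      show "Ij \<subseteq> Fi" using IjF True unfolding Fi_def by simp
    qed simp
    moreover have "Y \<le> (64/\<bar>\<eta>\<bar>^3 + 1) * Y" using Y0 by (simp add: distrib_right)
    ultimately show ?thesis by linarith
  next
    case False
    have "X \<le> (\<Sum>\<sigma>\<in>Ij. (\<Sum>\<sigma>'\<in>nbr_faces A i \<sigma>. \<bar>v \<sigma>'\<bar> powr q) * (2 * h^3))"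
      unfolding X_def
    proof (rule sum_mono, rule mult_mono)
      fix \<sigma> assume s: "\<sigma> \<in> Ij"
      then obtain k where k: "\<sigma> = (j, k)" using IjF unfolding faces_dir_def by (cases \<sigma>) auto
      show "\<bar>R_EE_val A i j v \<sigma>\<bar> powr q \<le> (\<Sum>\<sigma>'\<in>nbr_faces A i \<sigma>. \<bar>v \<sigma>'\<bar> powr q)"
        unfolding R_EE_val_def using False avg_bound[OF nbr_card(1)[of A i j k] _ _ q, of 4 v] nbr_card(2)[of A i j k] k by simp
      show "measure lborel (D \<sigma>) \<le> 2 * h^3" unfolding D_def h_def using dual_props(3)[OF G] s IjF by blast
    qed (auto intro: sum_nonneg)
    also have "\<dots> = 2 * h^3 * (\<Sum>\<sigma>\<in>Ij. \<Sum>\<sigma>'\<in>nbr_faces A i \<sigma>. \<bar>v \<sigma>'\<bar> powr q)"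
      by (simp add: sum_distrib_left mult.commute)
    also have "\<dots> \<le> 2 * h^3 * (4 * S)"
    proof (rule mult_left_mono)
      show "(\<Sum>\<sigma>\<in>Ij. \<Sum>\<sigma>'\<in>nbr_faces A i \<sigma>. \<bar>v \<sigma>'\<bar> powr q) \<le> 4 * S"
        unfolding S_def
      proof (rule count_bound[OF finIj finFi])
        show "\<And>s. s \<in> Ij \<Longrightarrow> nbr_faces A i s \<subseteq> Fi" unfolding Fi_def nbr_faces_def by auto
        fix f assume "f \<in> Fi"
        then obtain k' where "f = (i, k')" unfolding Fi_def faces_dir_def by (cases f) auto
        then show "real (card {s \<in> Ij. f \<in> nbr_faces A i s}) \<le> 4"
          unfolding Ij_def using nbr_inv_card[of A j i k'] by simp
      qed simp
      show "0 \<le> 2 * h^3" unfolding h_def using mp(1) by simp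
    qed
    finally have "X \<le> 8 * h^3 * S" by simp
    then show ?thesis
      by (intro finish[OF _ _ S0 Ylo]) (use mp in \<open>auto simp: \<eta>_def h_def\<close>)
  qed
  show ?thesis unfolding nR nE \<eta>_def[symmetric]
    by (rule final_ineq[OF X0 Y0 XY]) (use q in \<open>auto simp: \<eta>_def\<close>)
qed

lemma main_M:
  assumes G: "MAC_grid \<Omega> x A" and q: "1 \<le> q"
  shows "Lq_norm \<Omega> q (R_M x A i v) \<le> (64/\<bar>eta x A\<bar>^3 + 1) * Lq_norm \<Omega> q (fun_E x A i v)"
proof -
  have fin: "finite A" and mono: "\<forall>d. strict_mono (x d)" using G unfolding MAC_grid_def by auto
  note mp = mesh_props[OF G]
  define h where "h = mesh_size x A"
  define \<eta> where "\<eta> = eta x A"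
  define Fi where "Fi = faces_dir A i"
  define D where "D = dual_cell x A"
  define Y where "Y = (\<Sum>\<sigma>\<in>Fi. \<bar>v \<sigma>\<bar> powr q * measure lborel (D \<sigma>))"
  define S where "S = (\<Sum>\<sigma>\<in>Fi. \<bar>v \<sigma>\<bar> powr q)"
  define c where "c K = 1/2 * (\<Sum>\<sigma>\<in>faces_dir A i \<inter> cell_faces K. v \<sigma>)" for K
  define X where "X = (\<Sum>K\<in>A. \<bar>c K\<bar> powr q * measure lborel (cell x K))"
  have finFi: "finite Fi" unfolding Fi_def using finite_faces_dir[OF fin] .
  have nE: "Lq_norm \<Omega> q (fun_E x A i v) = Y powr (1/q)" unfolding Y_def Fi_def D_def using normE(1)[OF G q] .
  have Ylo: "(\<eta> * h / 2)^3 * S \<le> Y" unfolding Y_def S_def Fi_def D_def \<eta>_def h_def using normE(2)[OF G q] .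
  have RM: "R_M x A i v = (\<lambda>p. \<Sum>K\<in>A. c K * indicator (cell x K) p)" unfolding R_M_def c_def ..
  have nR: "Lq_norm \<Omega> q (R_M x A i v) = X powr (1/q)"
  proof -
    have "(LINT p:\<Omega>|lborel. \<bar>\<Sum>K\<in>A. c K * indicator (cell x K) p\<bar> powr q) = X"
      unfolding X_def
    proof (rule lint_repr[OF fin])
      show "\<And>s. s \<in> A \<Longrightarrow> cell x s \<in> fmeasurable lborel" by (rule cell_fm)
      show "\<And>s. s \<in> A \<Longrightarrow> cell x s \<subseteq> \<Omega>" using cell_sub[OF G] .
      show "\<And>s t. s \<in> A \<Longrightarrow> t \<in> A \<Longrightarrow> s \<noteq> t \<Longrightarrow> cell x s \<inter> cell x t = {}" using cells_disj[OF mono] by blast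
    qed (use q in simp)
    then show ?thesis unfolding Lq_norm_def RM by simp
  qed
  have S0: "0 \<le> S" unfolding S_def by (rule sum_nonneg) simp
  have X0: "0 \<le> X" unfolding X_def by (rule sum_nonneg) simp
  have Y0: "0 \<le> Y" unfolding Y_def by (rule sum_nonneg) simp
  have "X \<le> (\<Sum>K\<in>A. (\<Sum>\<sigma>\<in>Fi \<inter> cell_faces K. \<bar>v \<sigma>\<bar> powr q) * h^3)"
    unfolding X_def
  proof (rule sum_mono, rule mult_mono)
    fix K assume K: "K \<in> A"
    show "\<bar>c K\<bar> powr q \<le> (\<Sum>\<sigma>\<in>Fi \<inter> cell_faces K. \<bar>v \<sigma>\<bar> powr q)"
      unfolding c_def Fi_def using avg_bound[OF rm_card(1)[of A i K] _ _ q, of 2 v] rm_card(2)[of A i K] by simp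
    show "measure lborel (cell x K) \<le> h^3" unfolding h_def using cell_bound[OF G K] .
  qed (auto intro: sum_nonneg)
  also have "\<dots> = h^3 * (\<Sum>K\<in>A. \<Sum>\<sigma>\<in>Fi \<inter> cell_faces K. \<bar>v \<sigma>\<bar> powr q)"
    by (simp add: sum_distrib_left mult.commute)
  also have "\<dots> \<le> h^3 * (2 * S)"
  proof (rule mult_left_mono)
    show "(\<Sum>K\<in>A. \<Sum>\<sigma>\<in>Fi \<inter> cell_faces K. \<bar>v \<sigma>\<bar> powr q) \<le> 2 * S"
      unfolding S_def
    proof (rule count_bound[OF fin finFi])
      show "\<And>s. s \<in> A \<Longrightarrow> Fi \<inter> cell_faces s \<subseteq> Fi" by auto
      fix f assume "f \<in> Fi"
      then obtain k' where "f = (i, k')" unfolding Fi_def faces_dir_def by (cases f) auto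
      then show "real (card {s \<in> A. f \<in> Fi \<inter> cell_faces s}) \<le> 2"
        unfolding Fi_def using rm_inv[of A i k'] by simp
    qed simp
    show "0 \<le> h^3" unfolding h_def using mp(1) by simp
  qed
  also have "\<dots> \<le> 8 * h^3 * S" using S0 mp(1) unfolding h_def by simp
  finally have "X \<le> 8 * h^3 * S" .
  then have XY: "X \<le> (64/\<bar>\<eta>\<bar>^3 + 1) * Y"
    by (intro finish[OF _ _ S0 Ylo]) (use mp in \<open>auto simp: \<eta>_def h_def\<close>)
  show ?thesis unfolding nR nE \<eta>_def[symmetric]
    by (rule final_ineq[OF X0 Y0 XY]) (use q in \<open>auto simp: \<eta>_def\<close>)
qed

theorem lemma7p1:
  "\<exists>C :: real \<Rightarrow> real.
     (\<forall>t. 0 \<le> C t) \<and> (\<forall>a b. 0 < a \<longrightarrow> a \<le> b \<longrightarrow> C b \<le> C a) \<and>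
     (\<forall>(\<Omega> :: (real^3) set) x A. MAC_grid \<Omega> x A \<longrightarrow>
        (\<forall>q :: real. 1 \<le> q \<longrightarrow>
          (\<forall>i j (v :: face \<Rightarrow> real).
              (\<forall>\<sigma> \<in> faces_dir A i - int_faces_dir A i. v \<sigma> = 0) \<longrightarrow>
              Lq_norm \<Omega> q (R_EE x A i j v) \<le> C (eta x A) * Lq_norm \<Omega> q (fun_E x A i v)) \<and>
          (\<forall>i (v :: face \<Rightarrow> real).
              Lq_norm \<Omega> q (R_M x A i v) \<le> C (eta x A) * Lq_norm \<Omega> q (fun_E x A i v))))"
proof (intro exI[of _ "\<lambda>t. 64/\<bar>t\<bar>^3 + 1"] conjI allI impI)
  show "0 \<le> 64/\<bar>t\<bar>^3 + 1" for t :: real by simp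
  show "64/\<bar>b\<bar>^3 + 1 \<le> 64/\<bar>a\<bar>^3 + 1" if "0 < a" "a \<le> b" for a b :: real
  proof -
    have "a^3 \<le> b^3" using that by (intro power_mono) auto
    then have "64/b^3 \<le> 64/a^3" using that by (intro divide_left_mono) auto
    then show ?thesis using that by simp
  qed
  show "Lq_norm \<Omega> q (R_EE x A i j v) \<le> (64/\<bar>eta x A\<bar>^3 + 1) * Lq_norm \<Omega> q (fun_E x A i v)"
    if "MAC_grid \<Omega> x A" "1 \<le> q" for \<Omega> x A q i j v
    using main_EE[OF that] .
  show "Lq_norm \<Omega> q (R_M x A i v) \<le> (64/\<bar>eta x A\<bar>^3 + 1) * Lq_norm \<Omega> q (fun_E x A i v)"
    if "MAC_grid \<Omega> x A" "1 \<le> q" for \<Omega> x A q i v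
    using main_M[OF that] .
qed


end
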